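(* Let $A$ and $A+\sum_{i=1}^r\mathbf{x}_i\mathbf{x}_i^{\top}$ both lie in $\mathrm{SGL}_n(\mathbb{F}_2)$, where $\mathbf{x}_1,\ldots,\mathbf{x}_r\in\mathbb{F}_2^n$ are linearly independent and $\mathbf{x}_i^{\top}A^{-1}\mathbf{x}_i=1$ for all $i$. Then $d\big(A,A+\sum_{i=1}^r\mathbf{x}_i\mathbf{x}_i^{\top}\big)\ge r+1$.
   Context: $\mathrm{SGL}_n(\mathbb{F}_2)$ is the set of invertible symmetric $n\times n$ matrices over the binary field; $d$ is the graph distance in the graph $\Gamma_n$ on $\mathrm{SGL}_n(\mathbb{F}_2)$ where $A\sim B$ iff $\mathrm{rank}(A-B)=1$. *)

theory Defs
  imports "HOL-Analysis.Analysis" "HOL-Library.Z2" "HOL-Library.Extended_Nat"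
begin

definition SGL :: "(bit^'n^'n) set" where
  "SGL = {A. transpose A = A \<and> invertible A}"

definition sgl_adj :: "bit^'n^'n \<Rightarrow> bit^'n^'n \<Rightarrow> bool" where
  "sgl_adj A B \<longleftrightarrow> rank (A - B) = 1"

definition sgl_walk :: "nat \<Rightarrow> bit^'n^'n \<Rightarrow> bit^'n^'n \<Rightarrow> bool" where
  "sgl_walk k A B \<longleftrightarrow> (\<exists>p :: nat \<Rightarrow> bit^'n^'n. p 0 = A \<and> p k = B \<and>
      (\<forall>i\<le>k. p i \<in> SGL) \<and> (\<forall>i<k. sgl_adj (p i) (p (Suc i))))"

text \<open>Graph distance (infinity if no walk exists).\<close>
definition sgl_dist :: "bit^'n^'n \<Rightarrow> bit^'n^'n \<Rightarrow> enat" where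
  "sgl_dist A B = (INF k \<in> {k. sgl_walk k A B}. enat k)"

definition outer :: "bit^'n \<Rightarrow> bit^'n^'n" where
  "outer x = (\<chi> i j. x $ i * x $ j)"

end

theory Submission imports Defs begin

definition bdot :: "bit^'n \<Rightarrow> bit^'n \<Rightarrow> bit" where
  "bdot u w = (\<Sum>j\<in>UNIV. u$j * w$j)"

lemma bit_add_self[simp]: "(a::bit) + a = 0"
  by (cases a) simp_all

lemma bit_mult_self[simp]: "(a::bit) * a = a"
  by (cases a) simp_all

lemma bdot_comm: "bdot u w = bdot w u"
  unfolding bdot_def by (rule sum.cong) (simp_all add: mult.commute)

lemma bdot_add_right: "bdot u (w + y) = bdot u w + bdot u y"
  unfolding bdot_def by (simp only: vector_add_component distrib_left sum.distrib)

lemma bdot_scale_right: "bdot u (c *s w) = c * bdot u w"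
  unfolding bdot_def vector_smult_component sum_distrib_left
  by (rule sum.cong) (simp_all only: mult.left_commute)

lemma bdot_zero_right[simp]: "bdot u 0 = 0"
  unfolding bdot_def by simp

lemma bdot_sum_right: "finite S \<Longrightarrow> bdot u (\<Sum>i\<in>S. f i) = (\<Sum>i\<in>S. bdot u (f i))"
  by (induction S rule: finite_induct) (simp_all add: bdot_add_right)

lemma outer_mv: "outer v *v z = bdot v z *s v"
proof -
  have "(outer v *v z)$i = (bdot v z *s v)$i" for i
  proof -
    have "(outer v *v z)$i = (\<Sum>j\<in>UNIV. (v$i * v$j) * z$j)"
      by (simp only: matrix_vector_mult_def outer_def vec_lambda_beta)
    also have "\<dots> = (\<Sum>j\<in>UNIV. v$j * z$j) * v$i"
      by (simp only: sum_distrib_right) (rule sum.cong, simp_all only: mult_ac)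
    finally show ?thesis unfolding bdot_def vector_smult_component .
  qed
  then show ?thesis by (simp only: vec_eq_iff) blast
qed

lemma sum_mv: "finite S \<Longrightarrow> (\<Sum>i\<in>S. M i) *v (z::bit^'n) = (\<Sum>i\<in>S. M i *v z)"
  by (induction S rule: finite_induct) (simp_all add: matrix_vector_mult_add_rdistrib)

lemma transpose_outer: "transpose (outer v) = outer v"
  unfolding outer_def transpose_def by (simp add: vec_eq_iff mult.commute)

lemma bdot_vanish_span:
  assumes "w \<in> vec.span S" "\<And>s. s \<in> S \<Longrightarrow> bdot z s = 0"
  shows "bdot z w = 0"
  using assms(1)
proof (induction rule: vec.span_induct_alt)
  case base
  then show ?case by simp
next
  case (step c x y)
  then show ?case using assms(2) by (simp only: bdot_add_right bdot_scale_right) simp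
qed

lemma rank1_sym:
  fixes D :: "bit^'n^'n"
  assumes "transpose D = D" "rank D = 1"
  shows "\<exists>v. v \<noteq> 0 \<and> D = outer v"
proof -
  obtain B where B: "B \<subseteq> rows D" "vec.independent B" "rows D \<subseteq> vec.span B" "card B = vec.dim (rows D)"
    by (rule vec.basis_exists)
  then have "card B = 1" using assms(2) by (simp add: row_rank_def_gen)
  then obtain u where u: "B = {u}" by (rule card_1_singletonE)
  have u0: "u \<noteq> 0" using B(2) u vec.dependent_zero by blast
  have "\<forall>i. \<exists>c. D$i = c *s u"
  proof
    fix i
    have "row i D \<in> rows D" unfolding rows_def by blast
    then have "row i D \<in> range (\<lambda>k. k *s u)" using B(3) u vec.span_singleton by blast
    moreover have "row i D = D$i" unfolding row_def by (simp add: vec_eq_iff)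
    ultimately show "\<exists>c. D$i = c *s u" by auto
  qed
  then obtain c where c: "\<And>i. D$i = c i *s u" by metis
  have Dij: "D$i$j = c i * u$j" for i j using c[of i] by simp
  have sym: "c i * u$j = c j * u$i" for i j
    using assms(1) Dij[of i j] Dij[of j i] unfolding transpose_def
    by (metis vec_lambda_beta)
  obtain j0 where j0: "u$j0 = 1" using u0 by (metis bit_not_zero_iff vec_eq_iff zero_index)
  have "u \<in> rows D" using B(1) u by auto
  then obtain i0 where "u = row i0 D" unfolding rows_def by auto
  then have "u = c i0 *s u" using c[of i0] unfolding row_def by (simp add: vec_eq_iff)
  then have ci0: "c i0 = 1" using u0 by (cases "c i0") auto
  have "c j0 * u$i0 = 1" using sym[of i0 j0] ci0 j0 by simp
  then have cj0: "c j0 = 1" by (cases "c j0") auto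
  have "c i = u$i" for i using sym[of i j0] j0 cj0 by (cases "c i"; cases "u$i"; simp)
  then have "D = outer u" unfolding outer_def by (simp add: vec_eq_iff Dij)
  then show ?thesis using u0 by blast
qed

lemma bvec_add_self[simp]: "(v::bit^'n) + v = 0"
  by (simp add: vec_eq_iff)

lemma bmat_minus: "(X::bit^'n^'m) - Y = X + Y"
  by (simp add: vec_eq_iff)

lemma dual_exists:
  fixes a :: "bit^'n"
  assumes "a \<notin> vec.span S"
  shows "\<exists>z. bdot z a = 1 \<and> (\<forall>w\<in>vec.span S. bdot z w = 0)"
proof -
  obtain B where B: "B \<subseteq> S" "vec.independent B" "S \<subseteq> vec.span B"
    by (rule vec.maximal_independent_subset)
  have spB: "vec.span S \<subseteq> vec.span B"
    using B(3) vec.span_mono vec.span_span by blast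
  have "vec.span B \<subseteq> vec.span S" using B(1) vec.span_mono by blast
  then have aB: "a \<notin> vec.span B" using assms by blast
  then have ind: "vec.independent (insert a B)" using B(2) vec.independent_insertI by blast
  obtain i0 :: 'n where True by blast
  obtain g where g: "Vector_Spaces.linear (*s) (*s) g"
     "\<forall>y\<in>insert a B. g y = (if y = a then (axis i0 1 :: bit^'n) else 0)"
    using vec.linear_independent_extend[OF ind, of "\<lambda>y. if y = a then axis i0 1 else 0"] by blast
  define z where "z = matrix g $ i0"
  have gz: "bdot z y = g y $ i0" for y
  proof -
    have "g y $ i0 = (matrix g *v y) $ i0" using matrix_works[OF g(1)] by simp
    also have "\<dots> = bdot z y" unfolding z_def bdot_def matrix_vector_mult_def by simp
    finally show ?thesis by simp
  qed
  have "bdot z a = 1" using gz g(2) by simp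
  moreover have "bdot z b = 0" if "b \<in> B" for b
  proof -
    have "b \<noteq> a" using that aB vec.span_base by blast
    then show ?thesis using gz g(2) that by simp
  qed
  then have "\<forall>w\<in>vec.span S. bdot z w = 0"
    using spB bdot_vanish_span by blast
  ultimately show ?thesis by blast
qed

lemma bdot_mat_sym:
  assumes "transpose M = M"
  shows "bdot y (M *v w) = bdot w (M *v (y::bit^'n))"
proof -
  have "bdot y (M *v w) = (\<Sum>i\<in>UNIV. \<Sum>j\<in>UNIV. y$i * (M$i$j * w$j))"
    unfolding bdot_def matrix_vector_mult_def by (simp only: vec_lambda_beta sum_distrib_left)
  also have "\<dots> = (\<Sum>j\<in>UNIV. \<Sum>i\<in>UNIV. y$i * (M$i$j * w$j))"
    by (rule sum.swap)
  also have "\<dots> = (\<Sum>j\<in>UNIV. \<Sum>i\<in>UNIV. w$j * (M$j$i * y$i))"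
  proof (rule sum.cong[OF refl], rule sum.cong[OF refl])
    fix i j
    have "M$j$i = M$i$j" using assms unfolding transpose_def by (metis vec_lambda_beta)
    then show "y$i * (M$i$j * w$j) = w$j * (M$j$i * y$i)" by (simp only: mult_ac)
  qed
  also have "\<dots> = bdot w (M *v y)"
    unfolding bdot_def matrix_vector_mult_def by (simp only: vec_lambda_beta sum_distrib_left)
  finally show ?thesis .
qed

definition ell :: "bit^'n^'n \<Rightarrow> bit^'n \<Rightarrow> bit" where
  "ell M y = bdot y (M *v y)"

lemma bdot_add_left: "bdot (u + w) y = bdot u y + bdot w y"
  using bdot_add_right bdot_comm by metis

lemma bdot_scale_left: "bdot (c *s u) y = c * bdot u y"
  using bdot_scale_right bdot_comm by metis

lemma ell_add:
  assumes "transpose M = M"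
  shows "ell M (y + w) = ell M y + ell M w"
proof -
  have "ell M (y + w) = ell M y + ell M w + (bdot y (M *v w) + bdot w (M *v y))"
    unfolding ell_def by (simp only: matrix_vector_right_distrib bdot_add_left bdot_add_right add_ac)
  then show ?thesis using bdot_mat_sym[OF assms, of y w] by simp
qed

lemma ell_scale: "ell M (c *s y) = c * ell M y"
proof -
  have "ell M (c *s y) = (c * c) * ell M y"
    unfolding ell_def by (simp only: vec.scale bdot_scale_left bdot_scale_right mult_ac)
  then show ?thesis by simp
qed

lemma ell_sum:
  assumes "transpose M = M" "finite S"
  shows "ell M (\<Sum>j\<in>S. c j *s y j) = (\<Sum>j\<in>S. c j * ell M (y j))"
  using assms(2)
proof (induction S rule: finite_induct)
  case empty
  then show ?case by (simp add: ell_def)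
next
  case (insert a F)
  then show ?case by (simp only: sum.insert[OF insert(1,2)] ell_add[OF assms(1)] ell_scale insert(3))
qed


lemma bmat_add_self[simp]: "(X::bit^'n^'m) + X = 0"
  by (simp add: vec_eq_iff)

lemma transpose_minus_gen: "transpose ((X::bit^'n^'n) - Y) = transpose X - transpose Y"
  by (simp add: transpose_def vec_eq_iff)

lemma walk_bound:
  fixes A :: "bit^'n^'n" and x :: "nat \<Rightarrow> bit^'n" and r :: nat
  assumes r1: "r \<ge> 1"
    and AS: "A \<in> SGL"
    and injx: "inj_on x {1..r}"
    and indx: "vec.independent (x ` {1..r})"
    and hx: "\<forall>i\<in>{1..r}. (\<Sum>j\<in>UNIV. x i $ j * (matrix_inv A *v x i) $ j) = 1"
    and walk: "sgl_walk k A (A + (\<Sum>i\<in>{1..r}. outer (x i)))"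
  shows "r + 1 \<le> k"
proof (rule ccontr)
  assume "\<not> r + 1 \<le> k"
  then have kr: "k \<le> r" by simp
  define M where "M = matrix_inv A"
  have invA: "invertible A" and symA: "transpose A = A" using AS unfolding SGL_def by auto
  have AM: "A ** M = mat 1 \<and> M ** A = mat 1"
    using invA unfolding invertible_def M_def matrix_inv_def by (rule someI_ex)
  have Msym: "transpose M = M"
  proof -
    have "transpose M ** A = transpose M ** transpose A" using symA by simp
    also have "\<dots> = transpose (A ** M)" by (rule matrix_transpose_mul[symmetric])
    also have "\<dots> = mat 1" using AM by simp
    finally have tMA: "transpose M ** A = mat 1" .
    have "transpose M = transpose M ** (A ** M)" using AM by simp
    also have "\<dots> = (transpose M ** A) ** M" by (rule matrix_mul_assoc)
    also have "\<dots> = M" using tMA by simp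
    finally show ?thesis .
  qed
  have ellx: "ell M (x j) = 1" if "j \<in> {1..r}" for j
    using hx that unfolding ell_def bdot_def M_def by blast
  obtain p where p: "p 0 = A" "p k = A + (\<Sum>i\<in>{1..r}. outer (x i))"
    "\<forall>i\<le>k. p i \<in> SGL" "\<forall>i<k. sgl_adj (p i) (p (Suc i))"
    using walk unfolding sgl_walk_def by blast
  have "\<exists>v. v \<noteq> 0 \<and> p i - p (Suc i) = outer v" if "i < k" for i
  proof (rule rank1_sym)
    have "transpose (p i) = p i" "transpose (p (Suc i)) = p (Suc i)"
      using p(3) that unfolding SGL_def by auto
    then show "transpose (p i - p (Suc i)) = p i - p (Suc i)" by (simp only: transpose_minus_gen)
    show "rank (p i - p (Suc i)) = 1" using p(4) that unfolding sgl_adj_def by blast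
  qed
  then obtain v where v: "\<And>i. i < k \<Longrightarrow> v i \<noteq> 0 \<and> p i - p (Suc i) = outer (v i)"
    by metis
  have tele: "m \<le> k \<Longrightarrow> p m = A + (\<Sum>i<m. outer (v i))" for m
  proof (induction m)
    case 0
    then show ?case using p(1) by simp
  next
    case (Suc m)
    have "m < k" using Suc.prems by simp
    then have h: "p m - p (Suc m) = outer (v m)" using v by blast
    have "p m + outer (v m) = p (Suc m)"
      unfolding h[symmetric] bmat_minus by (simp only: add.assoc[symmetric] bmat_add_self add_0)
    then have "p (Suc m) = p m + outer (v m)" by (rule sym)
    then show ?case using Suc by (simp add: add.assoc)
  qed
  define C where "C = (\<Sum>i<k. outer (v i))"
  have Ceq: "C = (\<Sum>j\<in>{1..r}. outer (x j))"
    using tele[of k] p(2) unfolding C_def by simp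
  have Cz1: "C *v z = (\<Sum>i<k. bdot (v i) z *s v i)" for z
    unfolding C_def by (simp only: sum_mv[OF finite_lessThan] outer_mv)
  have Cz2: "C *v z = (\<Sum>j\<in>{1..r}. bdot (x j) z *s x j)" for z
    unfolding Ceq by (simp only: sum_mv[OF finite_atLeastAtMost] outer_mv)
  have xspan: "x ` {1..r} \<subseteq> vec.span (v ` {..<k})"
  proof
    fix y assume "y \<in> x ` {1..r}"
    then obtain j where j: "j \<in> {1..r}" "y = x j" by blast
    have xjn: "x j \<notin> vec.span (x ` {1..r} - {x j})"
    proof
      assume H: "x j \<in> vec.span (x ` {1..r} - {x j})"
      have "x j \<in> x ` {1..r}" using j(1) by (rule imageI)
      then have "vec.dependent (x ` {1..r})"
        unfolding vec.dependent_def using H by (rule bexI[rotated])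
      then show False using indx by contradiction
    qed
    obtain z where z: "bdot z (x j) = 1" "\<forall>w\<in>vec.span (x ` {1..r} - {x j}). bdot z w = 0"
      using dual_exists[OF xjn] by blast
    have terms: "bdot (x j') z *s x j' = (if j' = j then x j else 0)" if j': "j' \<in> {1..r}" for j'
    proof (cases "j' = j")
      case True
      have "bdot (x j') z = 1" using z(1) bdot_comm[of "x j" z] True by simp
      then show ?thesis using True by simp
    next
      case False
      have "x j' \<noteq> x j" by (rule inj_on_contraD[OF injx False j' j(1)])
      then have "x j' \<in> x ` {1..r} - {x j}" using j' by blast
      then have "x j' \<in> vec.span (x ` {1..r} - {x j})" by (rule vec.span_base)
      then have "bdot z (x j') = 0" using z(2) by blast
      then have "bdot (x j') z = 0" using bdot_comm[of "x j'" z] by simp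
      then show ?thesis using False by simp
    qed
    have "C *v z = (\<Sum>j'\<in>{1..r}. (if j' = j then x j else 0))"
      unfolding Cz2 by (rule sum.cong[OF refl]) (rule terms)
    also have "\<dots> = x j" by (simp only: sum.delta[OF finite_atLeastAtMost] if_P[OF j(1)])
    finally have "x j = C *v z" by (rule sym)
    also have "\<dots> \<in> vec.span (v ` {..<k})"
      unfolding Cz1 by (intro vec.span_sum vec.span_scale vec.span_base imageI)
    finally show "y \<in> vec.span (v ` {..<k})" using j(2) by simp
  qed
  have bound: "r \<le> card T" if "finite T" "x ` {1..r} \<subseteq> vec.span T" for T
  proof -
    have "card (x ` {1..r}) \<le> card T"
      using vec.independent_span_bound[OF that(1) indx that(2)] by blast
    then show ?thesis using card_image[OF injx] by simp
  qed
  have "r \<le> card (v ` {..<k})" using bound xspan by blast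
  also have "\<dots> \<le> k" using card_image_le[of "{..<k}" v] by simp
  finally have kr2: "k = r" using kr by simp
  then have k1: "k \<ge> 1" using r1 by simp
  show False
  proof (cases "v 0 \<in> vec.span (v ` {1..<k})")
    case True
    have sub: "v ` {..<k} \<subseteq> vec.span (v ` {1..<k})"
    proof
      fix y assume "y \<in> v ` {..<k}"
      then obtain i where i: "i < k" "y = v i" by blast
      show "y \<in> vec.span (v ` {1..<k})"
      proof (cases "i = 0")
        case True
        then show ?thesis using i(2) \<open>v 0 \<in> vec.span (v ` {1..<k})\<close> by simp
      next
        case False
        then have "i \<in> {1..<k}" using i(1) by simp
        then have "v i \<in> v ` {1..<k}" by (rule imageI)
        then show ?thesis unfolding i(2) by (rule vec.span_base)
      qed
    qed
    have "vec.span (v ` {..<k}) \<subseteq> vec.span (vec.span (v ` {1..<k}))"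
      by (rule vec.span_mono[OF sub])
    then have "vec.span (v ` {..<k}) \<subseteq> vec.span (v ` {1..<k})"
      by (simp only: vec.span_span)
    then have "x ` {1..r} \<subseteq> vec.span (v ` {1..<k})" by (rule order_trans[OF xspan])
    then have "r \<le> card (v ` {1..<k})" by (intro bound finite_imageI finite_atLeastLessThan)
    also have "\<dots> \<le> card {1..<k}" by (rule card_image_le) simp
    also have "\<dots> = k - 1" by simp
    finally show False using kr2 k1 by simp
  next
    case False
    obtain z where z: "bdot z (v 0) = 1" "\<forall>w\<in>vec.span (v ` {1..<k}). bdot z w = 0"
      using dual_exists[OF False] by blast
    have terms: "bdot (v i) z *s v i = (if i = 0 then v 0 else 0)" if i: "i \<in> {..<k}" for i
    proof (cases "i = 0")
      case True
      have "bdot (v i) z = 1" using z(1) bdot_comm[of "v 0" z] True by simp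
      then show ?thesis using True by simp
    next
      case False
      then have "i \<in> {1..<k}" using i by simp
      then have "v i \<in> v ` {1..<k}" by (rule imageI)
      then have "v i \<in> vec.span (v ` {1..<k})" by (rule vec.span_base)
      then have "bdot z (v i) = 0" using z(2) by blast
      then have "bdot (v i) z = 0" using bdot_comm[of "v i" z] by simp
      then show ?thesis using False by simp
    qed
    have "C *v z = (\<Sum>i\<in>{..<k}. (if i = 0 then v 0 else 0))"
      unfolding Cz1 by (rule sum.cong[OF refl]) (rule terms)
    also have "\<dots> = v 0"
    proof -
      have "(0::nat) \<in> {..<k}" using k1 by simp
      then show ?thesis by (simp only: sum.delta[OF finite_lessThan] if_P)
    qed
    finally have Czv: "C *v z = v 0" .
    have v0: "v 0 = (\<Sum>j\<in>{1..r}. bdot (x j) z *s x j)"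
    proof -
      have "v 0 = C *v z" using Czv by (rule sym)
      also have "\<dots> = (\<Sum>j\<in>{1..r}. bdot (x j) z *s x j)" by (rule Cz2)
      finally show ?thesis .
    qed
    have "ell M (v 0) = (\<Sum>j\<in>{1..r}. bdot (x j) z * ell M (x j))"
      unfolding v0 by (rule ell_sum[OF Msym finite_atLeastAtMost])
    also have "\<dots> = (\<Sum>j\<in>{1..r}. bdot (x j) z)"
      by (rule sum.cong[OF refl]) (simp only: ellx mult_1_right)
    also have "\<dots> = (\<Sum>j\<in>{1..r}. bdot (x j) z * bdot z (x j))"
      by (rule sum.cong[OF refl]) (subst bdot_comm[of z], rule bit_mult_self[symmetric])
    also have "\<dots> = bdot z (v 0)"
      unfolding v0 by (simp only: bdot_sum_right[OF finite_atLeastAtMost] bdot_scale_right)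
    finally have ell1: "ell M (v 0) = 1" using z(1) by (rule trans)
    have p1: "p 1 = A + outer (v 0)" using tele[of 1] k1 by simp
    have "invertible (p 1)" using p(3) k1 unfolding SGL_def by auto
    then obtain N where N: "N ** p 1 = mat 1" unfolding invertible_def by blast
    define w where "w = M *v v 0"
    have Aw: "A *v w = v 0" unfolding w_def using AM by (simp add: matrix_vector_mul_assoc)
    have "p 1 *v w = v 0 + bdot (v 0) w *s v 0"
      unfolding p1 by (simp only: matrix_vector_mult_add_rdistrib Aw outer_mv)
    also have "bdot (v 0) w = 1" using ell1 unfolding ell_def w_def .
    finally have "p 1 *v w = 0" by simp
    have "w = (N ** p 1) *v w" using N by simp
    also have "\<dots> = N *v (p 1 *v w)" by (rule matrix_vector_mul_assoc[symmetric])
    also have "\<dots> = 0" using \<open>p 1 *v w = 0\<close> by simp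
    finally have "w = 0" .
    then have "v 0 = 0" using Aw by simp
    then show False using v[of 0] k1 by simp
  qed
qed

theorem lemma4p6:
  fixes A :: "bit^'n^'n" and x :: "nat \<Rightarrow> bit^'n" and r :: nat
  assumes "r \<ge> 1"
    and "A \<in> SGL"
    and "A + (\<Sum>i\<in>{1..r}. outer (x i)) \<in> SGL"
    and "inj_on x {1..r}"
    and "vec.independent (x ` {1..r})"
    and "\<forall>i\<in>{1..r}. (\<Sum>j\<in>UNIV. x i $ j * (matrix_inv A *v x i) $ j) = 1"
  shows "sgl_dist A (A + (\<Sum>i\<in>{1..r}. outer (x i))) \<ge> enat (r + 1)"
  unfolding sgl_dist_def
proof (rule INF_greatest)
  fix k assume "k \<in> {k. sgl_walk k A (A + (\<Sum>i\<in>{1..r}. outer (x i)))}"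
  then have "r + 1 \<le> k" using walk_bound[OF assms(1,2,4,5,6)] by blast
  then show "enat (r + 1) \<le> enat k" by simp
qed

end
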